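(* For every $T$-round DRACC instance with arbitrary valuation functions, the corresponding Dd-MDP is $O\!\left(T^{\frac{CW}{CW+1}}\right)$-chasable (with respect to arbitrary target pricing policies).
   Context: DRACC problem: there are $N$ resources and $T$ users arriving in rounds $t=1,\dots,T$. Resource $i\in[N]$ arrives at the start of round $t_a(i)$ and departs at the end of round $t_e(i)$ ($1\le t_a(i)\le t_e(i)\le T$), with capacity $c(i)\in\mathbb{Z}_{>0}$ units on arrival. $A_t\subseteq[N]$ is the set of resources active at time $t$. $C\ge\max_i c(i)$ and $W\ge\max_t|A_t|$ are known upper bounds independent of $T$. User $t$ has a valuation $v_t:2^{A_t}\to[0,1)$ with $v_t(\emptyset)=0$ and is quasi-linear. In round $t$ a mechanism posts $\bm p_t\in(0,1]^{A_t}$; user $t$ receives one unit of each resource in the demand set $\hat A^{\bm p}_t=\arg\max_{A\subseteq A_t}\{v_t(A)-\sum_{i\in A}\bm p(i)\}$ (ties broken lexicographically) and pays $\hat q^{\bm p}_t=\sum_{i\in\hat A^{\bm p}_t}\bm p(i)$; $v_t$ is revealed after posting. The inventory vector $\bm\lambda_t\in\{0,\dots,C\}^{A_t}$ has $\bm\lambda_t(i)=c(i)$ if $t_a(i)=t$ and $\bm\lambda_{t+1}(i)=\bm\lambda_t(i)-\mathbb{1}[i\in\hat A^{\bm p_t}_t]$ for $i\in A_t\cap A_{t+1}$. A price vector $\bm p$ is feasible for $\bm\lambda$ if $\bm p(i)=1$ whenever $\bm\lambda(i)=0$; posted prices must be feasible. A pricing policy maps each inventory vector to a feasible price vector. All instance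 data are chosen by an adaptive adversary. Corresponding Dd-MDP: states are inventory vectors; feasible actions are feasible price vectors; reward $f_t(s,x)=\hat q^x_t$; transition $g_t(s,x)=s'$ with $s'(i)=s(i)-\mathbb{1}[i\in\hat A^x_t]$ for $i\in A_{t+1}\cap A_t$ and $s'(i)=c(i)$ for $i\in A_{t+1}\setminus A_t$. Policy simulation: $s^\gamma_1=s_1$, $x^\gamma_t=\gamma(s^\gamma_t)$, $s^\gamma_{t+1}=g_t(s^\gamma_t,x^\gamma_t)$. $\sigma$-chasability: there is a (possibly randomized) chasing oracle such that for any target policy $\gamma$, any round $t_{\mathrm{init}}$ and any initial state $s_{\mathrm{init}}$, it outputs in each round $t\ge t_{\mathrm{init}}$ an action $\hat x(t)$ feasible for $\hat s(t)$, where $\hat s(t_{\mathrm{init}})=s_{\mathrm{init}}$, $\hat s(t)=g_{t-1}(\hat s(t-1),\hat x(t-1))$, and afterwards observes $g_t,f_t$; and for every $t_{\mathrm{final}}\ge t_{\mathrm{init}}$, $\sum_{t=t_{\mathrm{init}}}^{t_{\mathrm{final}}}f_t(s^\gamma_t,x^\gamma_t)-\sum_{t=t_{\mathrm{init}}}^{t_{\mathrm{final}}}\mathbb{E}[f_t(\hat s(t),\hat x(t))]\le\sigma$. *)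

theory Defs
  imports "HOL-Probability.Probability"
begin

(* Inventory vectors / states: partial maps, domain = active resources A_t *)
type_synonym inv = "nat \<rightharpoonup> nat"
(* Price vectors / actions: partial maps, domain = A_t *)
type_synonym prices = "nat \<rightharpoonup> real"

(* Data the (adaptive) adversary fixes for round t:
   the active set A_t, capacities c(i) (relevant for i arriving at t), valuation v_t *)
record round_data =
  rd_act :: "nat set"
  rd_cap :: "nat \<Rightarrow> nat"
  rd_val :: "nat set \<Rightarrow> real"

definition util :: "(nat set \<Rightarrow> real) \<Rightarrow> prices \<Rightarrow> nat set \<Rightarrow> real" where
  "util v p B = v B - (\<Sum>i\<in>B. the (p i))"

definition demand :: "round_data \<Rightarrow> prices \<Rightarrow> nat set" where
  "demand r p =
    (let M = {B. B \<subseteq> rd_act r \<and>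
                 (\<forall>B'. B' \<subseteq> rd_act r \<longrightarrow> util (rd_val r) p B' \<le> util (rd_val r) p B)}
     in THE D. D \<in> M \<and> (\<forall>D'\<in>M. lexordp_eq (sorted_list_of_set D) (sorted_list_of_set D')))"

(* payment = reward f_t(s,x) *)
definition payment :: "round_data \<Rightarrow> prices \<Rightarrow> real" where
  "payment r p = (\<Sum>i\<in>demand r p. the (p i))"

definition feasible :: "inv \<Rightarrow> prices \<Rightarrow> bool" where
  "feasible s p \<longleftrightarrow> dom p = dom s \<and>
     (\<forall>i\<in>dom s. 0 < the (p i) \<and> the (p i) \<le> 1 \<and> (s i = Some 0 \<longrightarrow> p i = Some 1))"

(* transition g_t, using data of rounds t (r) and t+1 (r') *)
definition trans :: "round_data \<Rightarrow> round_data \<Rightarrow> inv \<Rightarrow> prices \<Rightarrow> inv" where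
  "trans r r' s p = (\<lambda>i. if i \<in> rd_act r' then
       (if i \<in> rd_act r then Some (the (s i) - (if i \<in> demand r p then 1 else 0))
        else Some (rd_cap r' i))
     else None)"

definition init_state :: "round_data \<Rightarrow> inv" where
  "init_state r = (\<lambda>i. if i \<in> rd_act r then Some (rd_cap r i) else None)"

(* pol_state d \<gamma> n = state s^\<gamma>_{n+1} of the policy simulation started at s_1 *)
primrec pol_state :: "(nat \<Rightarrow> round_data) \<Rightarrow> (inv \<Rightarrow> prices) \<Rightarrow> nat \<Rightarrow> inv" where
  "pol_state d \<gamma> 0 = init_state (d 1)"
| "pol_state d \<gamma> (Suc n) =
     trans (d (Suc n)) (d (Suc (Suc n))) (pol_state d \<gamma> n) (\<gamma> (pol_state d \<gamma> n))"

definition target_state :: "(nat \<Rightarrow> round_data) \<Rightarrow> (inv \<Rightarrow> prices) \<Rightarrow> nat \<Rightarrow> inv" where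
  "target_state d \<gamma> t = pol_state d \<gamma> (t - 1)"

definition valid_instance :: "nat \<Rightarrow> nat \<Rightarrow> nat \<Rightarrow> (nat \<Rightarrow> round_data) \<Rightarrow> bool" where
  "valid_instance C W T d \<longleftrightarrow>
     (\<forall>t\<in>{1..T}. finite (rd_act (d t)) \<and> card (rd_act (d t)) \<le> W) \<and>
     (\<forall>i t1 t t2. 1 \<le> t1 \<and> t1 \<le> t \<and> t \<le> t2 \<and> t2 \<le> T \<and>
        i \<in> rd_act (d t1) \<and> i \<in> rd_act (d t2) \<longrightarrow> i \<in> rd_act (d t)) \<and>
     (\<forall>t\<in>{1..T}. \<forall>i\<in>rd_act (d t). (t = 1 \<or> i \<notin> rd_act (d (t - 1))) \<longrightarrow>
        0 < rd_cap (d t) i \<and> rd_cap (d t) i \<le> C) \<and>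
     (\<forall>t\<in>{1..T}. rd_val (d t) {} = 0 \<and>
        (\<forall>B. B \<subseteq> rd_act (d t) \<longrightarrow> 0 \<le> rd_val (d t) B \<and> rd_val (d t) B < 1))"

(* deterministic oracle strategy: (round t, observed data of rounds 1..t-1, current state) \<mapsto> prices *)
type_synonym strategy = "nat \<Rightarrow> round_data list \<Rightarrow> inv \<Rightarrow> prices"
(* adaptive adversary: (round t, oracle's realized prices in rounds t_init..t-1) \<mapsto> data of round t *)
type_synonym adversary = "nat \<Rightarrow> prices list \<Rightarrow> round_data"

definition rdata :: "adversary \<Rightarrow> nat \<Rightarrow> prices list \<Rightarrow> nat \<Rightarrow> round_data" where
  "rdata adv t0 xs \<tau> = adv \<tau> (take (\<tau> - t0) xs)"

(* ohist \<omega> adv t0 s0 n = (oracle state at round t0+n, oracle actions in rounds t0..t0+n-1) *)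
primrec ohist :: "strategy \<Rightarrow> adversary \<Rightarrow> nat \<Rightarrow> inv \<Rightarrow> nat \<Rightarrow> inv \<times> prices list" where
  "ohist \<omega> adv t0 s0 0 = (s0, [])"
| "ohist \<omega> adv t0 s0 (Suc n) =
     (let s = fst (ohist \<omega> adv t0 s0 n); xs = snd (ohist \<omega> adv t0 s0 n); t = t0 + n;
          x = \<omega> t (map (rdata adv t0 xs) [1..<t]) s; xs' = xs @ [x]
      in (trans (adv t xs) (adv (Suc t) xs') s x, xs'))"

definition oracle_actions :: "strategy \<Rightarrow> adversary \<Rightarrow> nat \<Rightarrow> inv \<Rightarrow> nat \<Rightarrow> prices list" where
  "oracle_actions \<omega> adv t0 s0 T = snd (ohist \<omega> adv t0 s0 (Suc T - t0))"

definition chase_gap :: "(inv \<Rightarrow> prices) \<Rightarrow> strategy \<Rightarrow> adversary \<Rightarrow> nat \<Rightarrow> inv \<Rightarrow> nat \<Rightarrow> nat \<Rightarrow> real" where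
  "chase_gap \<gamma> \<omega> adv t0 s0 T tf =
     (let xs = oracle_actions \<omega> adv t0 s0 T; d = rdata adv t0 xs
      in \<Sum>t\<in>{t0..tf}. payment (d t) (\<gamma> (target_state d \<gamma> t)) - payment (d t) (xs ! (t - t0)))"

end

theory Submission
  imports Defs
begin
lemma integral_bind_pmf_fin:
  fixes f :: "'b \<Rightarrow> real"
  assumes fM: "finite (set_pmf M)" and fN: "\<And>x. x \<in> set_pmf M \<Longrightarrow> finite (set_pmf (N x))"
  shows "measure_pmf.expectation (bind_pmf M N) f
       = measure_pmf.expectation M (\<lambda>x. measure_pmf.expectation (N x) f)"
proof -
  define A where "A = (\<Union>x\<in>set_pmf M. set_pmf (N x))"
  have fA: "finite A" using fM fN by (auto simp: A_def)
  have "measure_pmf.expectation (bind_pmf M N) f = (\<Sum>a\<in>A. pmf (bind_pmf M N) a * f a)"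
    by (subst integral_measure_pmf[OF fA]) (auto simp: A_def)
  also have "\<dots> = (\<Sum>a\<in>A. measure_pmf.expectation M (\<lambda>x. pmf (N x) a * f a))"
    by (simp add: pmf_bind)
  also have "\<dots> = measure_pmf.expectation M (\<lambda>x. \<Sum>a\<in>A. pmf (N x) a * f a)"
    using Bochner_Integration.integral_sum[where I=A and M="measure_pmf M" and f="\<lambda>a x. pmf (N x) a * f a"]
    by (simp add: integrable_measure_pmf_finite[OF fM])
  also have "\<dots> = measure_pmf.expectation M (\<lambda>x. measure_pmf.expectation (N x) f)"
    apply (rule integral_cong_AE)
      apply simp
     apply simp
    apply (rule AE_pmfI)
    apply (subst integral_measure_pmf[OF fA])
     apply (auto simp: A_def)
    done
  finally show ?thesis .
qed

fun coins :: "real \<Rightarrow> nat \<Rightarrow> bool list pmf" where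
  "coins e 0 = return_pmf []"
| "coins e (Suc k) = bind_pmf (coins e k) (\<lambda>cs. map_pmf (\<lambda>b. cs @ [b]) (bernoulli_pmf e))"

lemma coins_set: "cs \<in> set_pmf (coins e k) \<Longrightarrow> length cs = k"
  by (induction k arbitrary: cs) auto

lemma coins_finite: "finite (set_pmf (coins e k))"
proof (induction k)
  case 0 then show ?case by simp
next
  case (Suc k)
  have "finite (set_pmf (bernoulli_pmf e))"
    by (rule finite_subset[of _ UNIV]) auto
  then show ?case using Suc by simp
qed

lemma coins_take: "map_pmf (take k) (coins e (k + j)) = coins e k"
proof (induction j)
  case 0
  have "map_pmf (take k) (coins e k) = map_pmf id (coins e k)"
    by (rule map_pmf_cong) (auto dest: coins_set)
  then show ?case by (simp add: pmf.map_id)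
next
  case (Suc j)
  have "map_pmf (take k) (coins e (k + Suc j))
      = bind_pmf (coins e (k + j)) (\<lambda>cs. map_pmf (take k) (map_pmf (\<lambda>b. cs @ [b]) (bernoulli_pmf e)))"
    by (simp add: map_bind_pmf)
  also have "\<dots> = bind_pmf (coins e (k + j)) (\<lambda>cs. return_pmf (take k cs))"
    apply (rule bind_pmf_cong)
     apply simp
    apply (simp add: map_pmf_comp)
    apply (drule coins_set)
    apply simp
    done
  also have "\<dots> = map_pmf (take k) (coins e (k + j))"
    by (simp add: map_pmf_def)
  finally show ?case using Suc by simp
qed

lemma coins_step:
  fixes f :: "bool list \<Rightarrow> real"
  assumes "0 \<le> e" "e \<le> 1"
  shows "measure_pmf.expectation (coins e (Suc k)) f
     = measure_pmf.expectation (coins e k) (\<lambda>cs. e * f (cs @ [True]) + (1 - e) * f (cs @ [False]))"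
proof -
  have fb: "finite (set_pmf (map_pmf (\<lambda>b. cs @ [b]) (bernoulli_pmf e)))" for cs
    by (rule finite_subset[of _ "(\<lambda>b. cs @ [b]) ` UNIV"]) auto
  show ?thesis
    apply simp
    apply (subst integral_bind_pmf_fin[OF coins_finite fb])
    using assms by (simp add: algebra_simps)
qed

definition dM :: "round_data \<Rightarrow> prices \<Rightarrow> nat set set" where
  "dM r p = {B. B \<subseteq> rd_act r \<and>
                 (\<forall>B'. B' \<subseteq> rd_act r \<longrightarrow> util (rd_val r) p B' \<le> util (rd_val r) p B)}"

lemma ex_lexmin:
  "finite L \<Longrightarrow> L \<noteq> {} \<Longrightarrow> \<exists>x\<in>L. \<forall>y\<in>L. lexordp_eq x (y::nat list)"
proof (induction L rule: finite_ne_induct)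
  case (singleton x) then show ?case by (simp add: lexordp_eq_refl)
next
  case (insert a L)
  then obtain x where x: "x \<in> L" "\<forall>y\<in>L. lexordp_eq x y" by blast
  show ?case
  proof (cases "lexordp_eq a x")
    case True
    then show ?thesis using x by (auto simp: lexordp_eq_refl intro: lexordp_eq_trans)
  next
    case False
    then have "lexordp_eq x a" using lexordp_eq_linear by blast
    then show ?thesis using x by auto
  qed
qed

lemma demand_char:
  assumes fin: "finite (rd_act r)"
  shows "demand r p \<in> dM r p \<and> (\<forall>D'\<in>dM r p. lexordp_eq (sorted_list_of_set (demand r p)) (sorted_list_of_set D'))"
proof -
  let ?u = "util (rd_val r) p"
  have fP: "finite (Pow (rd_act r))" using fin by simp
  have "Max (?u ` Pow (rd_act r)) \<in> ?u ` Pow (rd_act r)"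
    using fP by (intro Max_in) auto
  then obtain B where B1: "B \<in> Pow (rd_act r)" "?u B = Max (?u ` Pow (rd_act r))" by auto
  have B: "B \<in> Pow (rd_act r)" "\<forall>B'\<in>Pow (rd_act r). ?u B' \<le> ?u B"
    using B1 fP by auto
  have Mne: "dM r p \<noteq> {}" using B unfolding dM_def by auto
  have Mfin: "finite (dM r p)" unfolding dM_def by (rule finite_subset[OF _ fP]) auto
  obtain x where x: "x \<in> sorted_list_of_set ` dM r p" "\<forall>y\<in>sorted_list_of_set ` dM r p. lexordp_eq x y"
    using ex_lexmin[of "sorted_list_of_set ` dM r p"] Mne Mfin by blast
  then obtain D where D: "D \<in> dM r p" "x = sorted_list_of_set D" by blast
  have fD: "\<And>D. D \<in> dM r p \<Longrightarrow> finite D" unfolding dM_def using fin finite_subset by blast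
  have P: "D \<in> dM r p \<and> (\<forall>D'\<in>dM r p. lexordp_eq (sorted_list_of_set D) (sorted_list_of_set D'))"
    using D x by auto
  have U: "D' = D" if "D' \<in> dM r p \<and> (\<forall>D''\<in>dM r p. lexordp_eq (sorted_list_of_set D') (sorted_list_of_set D''))" for D'
  proof -
    have "sorted_list_of_set D' = sorted_list_of_set D"
      using that P lexordp_eq_antisym by blast
    then show ?thesis using fD that P
      by (metis sorted_list_of_set.set_sorted_key_list_of_set)
  qed
  have dD: "demand r p = D"
    unfolding demand_def dM_def[symmetric] Let_def
    apply (rule the_equality)
     apply (rule P)
    apply (rule U)
    apply assumption
    done
  show ?thesis unfolding dD by (rule P)
qed

lemma demand_unique:
  assumes fin: "finite (rd_act r)" and "D \<in> dM r p"
    and "\<forall>D'\<in>dM r p. lexordp_eq (sorted_list_of_set D) (sorted_list_of_set D')"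
  shows "demand r p = D"
proof -
  have fD: "\<And>D. D \<in> dM r p \<Longrightarrow> finite D" unfolding dM_def using fin finite_subset by blast
  have c: "demand r p \<in> dM r p" "lexordp_eq (sorted_list_of_set (demand r p)) (sorted_list_of_set D)"
    using demand_char[OF fin] assms by auto
  have "lexordp_eq (sorted_list_of_set D) (sorted_list_of_set (demand r p))" using assms c by auto
  then have "sorted_list_of_set (demand r p) = sorted_list_of_set D"
    using c lexordp_eq_antisym by blast
  then show ?thesis using fD c assms
    by (metis sorted_list_of_set.set_sorted_key_list_of_set)
qed

lemma demand_sub: "finite (rd_act r) \<Longrightarrow> demand r p \<subseteq> rd_act r"
  using demand_char unfolding dM_def by blast

lemma demand_raise:
  assumes fin: "finite (rd_act r)"
    and le: "\<forall>i\<in>rd_act r. the (p i) \<le> the (p' i)"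
    and eq: "\<forall>i\<in>demand r p. p' i = p i"
  shows "demand r p' = demand r p"
proof -
  let ?D = "demand r p"
  let ?u = "util (rd_val r) p" and ?u' = "util (rd_val r) p'"
  have ch: "?D \<in> dM r p" "\<forall>D'\<in>dM r p. lexordp_eq (sorted_list_of_set ?D) (sorted_list_of_set D')"
    using demand_char[OF fin] by auto
  have Dsub: "?D \<subseteq> rd_act r" using ch unfolding dM_def by auto
  have ule: "?u' B \<le> ?u B" if "B \<subseteq> rd_act r" for B
  proof -
    have "(\<Sum>i\<in>B. the (p i)) \<le> (\<Sum>i\<in>B. the (p' i))"
      using le that by (intro sum_mono) auto
    then show ?thesis unfolding util_def by simp
  qed
  have ueq: "?u' ?D = ?u ?D" unfolding util_def using eq by (auto intro!: sum.cong)
  have Dmax: "?u B \<le> ?u ?D" if "B \<subseteq> rd_act r" for B using ch that unfolding dM_def by auto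
  have D1: "?D \<in> dM r p'"
    unfolding dM_def using Dsub ule Dmax ueq by (auto intro: order_trans)
  have sub: "D' \<in> dM r p" if "D' \<in> dM r p'" for D'
  proof -
    have D'sub: "D' \<subseteq> rd_act r" and m: "?u' ?D \<le> ?u' D'" using that Dsub unfolding dM_def by auto
    have "?u B \<le> ?u D'" if "B \<subseteq> rd_act r" for B
      using Dmax[OF that] ueq m ule[OF D'sub] by linarith
    then show ?thesis using D'sub unfolding dM_def by auto
  qed
  show ?thesis
  proof (rule demand_unique[OF fin D1], intro ballI)
    fix D' assume "D' \<in> dM r p'"
    then have "D' \<in> dM r p" by (rule sub)
    then show "lexordp_eq (sorted_list_of_set ?D) (sorted_list_of_set D')"
      using ch(2) by (rule bspec[rotated])
  qed
qed

lemma demand_price_lt1: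
  assumes fin: "finite (rd_act r)" and v0: "rd_val r {} = 0"
    and v1: "\<forall>B. B \<subseteq> rd_act r \<longrightarrow> rd_val r B < 1"
    and pos: "\<forall>i\<in>rd_act r. 0 < the (p i)"
  shows "payment r p < 1" "0 \<le> payment r p" "\<And>i. i \<in> demand r p \<Longrightarrow> the (p i) < 1"
proof -
  let ?D = "demand r p"
  have ch: "?D \<in> dM r p" using demand_char[OF fin] by auto
  have Dsub: "?D \<subseteq> rd_act r" using ch unfolding dM_def by auto
  have "util (rd_val r) p {} \<le> util (rd_val r) p ?D" using ch unfolding dM_def by auto
  then have "payment r p \<le> rd_val r ?D" unfolding util_def payment_def using v0 by simp
  moreover have "rd_val r ?D < 1" using v1 Dsub by blast
  ultimately show lt: "payment r p < 1" by linarith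
  have fD: "finite ?D" using Dsub fin finite_subset by blast
  show "0 \<le> payment r p" unfolding payment_def using pos Dsub
    by (intro sum_nonneg) (auto simp: less_imp_le)
  fix i assume i: "i \<in> ?D"
  have "the (p i) \<le> payment r p" unfolding payment_def
    using pos Dsub i fD by (intro member_le_sum) (auto simp: less_imp_le)
  then show "the (p i) < 1" using lt by simp
qed

definition freeze :: "inv \<Rightarrow> prices" where
  "freeze s = (\<lambda>i. if i \<in> dom s then Some 1 else None)"
definition copyp :: "inv \<Rightarrow> prices \<Rightarrow> prices" where
  "copyp s p = (\<lambda>i. if i \<in> dom s then (if s i = Some 0 then Some 1 else p i) else None)"
definition Phi :: "inv \<Rightarrow> inv \<Rightarrow> nat" where
  "Phi sh sg = (\<Sum>i\<in>dom sh. the (sg i) - the (sh i))"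

lemma dom_trans: "dom (trans r r' s p) = rd_act r'"
  by (auto simp: trans_def split: if_splits)

lemma dom_init_state: "dom (init_state r) = rd_act r"
  by (auto simp: init_state_def split: if_splits)

lemma dom_pol_state: "dom (pol_state d \<gamma> n) = rd_act (d (Suc n))"
  by (cases n) (auto simp: dom_init_state dom_trans)

lemma dom_freeze: "dom (freeze s) = dom s"
  by (auto simp: freeze_def split: if_splits)

lemma feasible_freeze: "feasible s (freeze s)"
  unfolding feasible_def dom_freeze by (auto simp: freeze_def)

lemma feasible_copyp:
  assumes "dom q = dom s" "feasible q p"
  shows "feasible s (copyp s p)"
proof -
  have dp: "dom p = dom s" using assms unfolding feasible_def by simp
  have "dom (copyp s p) = dom s"
  proof
    show "dom (copyp s p) \<subseteq> dom s" by (auto simp: copyp_def split: if_splits)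
    show "dom s \<subseteq> dom (copyp s p)"
    proof
      fix i assume i: "i \<in> dom s"
      then have "i \<in> dom p" using dp by simp
      then show "i \<in> dom (copyp s p)" using i by (auto simp: copyp_def)
    qed
  qed
  then show ?thesis using assms unfolding feasible_def by (auto simp: copyp_def)
qed

lemma freeze_demand:
  assumes fin: "finite (rd_act r)" and v0: "rd_val r {} = 0"
    and v1: "\<forall>B. B \<subseteq> rd_act r \<longrightarrow> rd_val r B < 1" and ds: "dom s = rd_act r"
  shows "demand r (freeze s) = {}" "payment r (freeze s) = 0"
proof -
  have pos: "\<forall>i\<in>rd_act r. 0 < the (freeze s i)" using ds by (auto simp: freeze_def)
  have "i \<notin> demand r (freeze s)" for i
  proof
    assume i: "i \<in> demand r (freeze s)"
    then have "the (freeze s i) < 1" using demand_price_lt1(3)[OF fin v0 v1 pos] by blast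
    moreover have "i \<in> rd_act r" using i demand_sub[OF fin] by blast
    ultimately show False using ds by (auto simp: freeze_def)
  qed
  then show "demand r (freeze s) = {}" by blast
  then show "payment r (freeze s) = 0" by (simp add: payment_def)
qed

lemma Phi_trans_le:
  assumes fin: "finite (rd_act r)" and dsh: "dom sh = rd_act r"
  shows "Phi (trans r r' sh x) (trans r r' sg p)
     \<le> (\<Sum>i\<in>rd_act r. (the (sg i) - (if i \<in> demand r p then 1 else 0))
                      - (the (sh i) - (if i \<in> demand r x then 1 else 0)))"
proof (cases "finite (rd_act r')")
  case False
  then show ?thesis by (simp add: Phi_def dom_trans)
next
  case True
  define f where "f i = (the (sg i) - (if i \<in> demand r p then 1 else 0))
                      - (the (sh i) - (if i \<in> demand r x then 1 else 0))" for i
  have "Phi (trans r r' sh x) (trans r r' sg p) = (\<Sum>i\<in>rd_act r'. if i \<in> rd_act r then f i else 0)"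
    unfolding Phi_def dom_trans by (rule sum.cong) (auto simp: trans_def f_def)
  also have "\<dots> = (\<Sum>i\<in>rd_act r' \<inter> rd_act r. f i)"
    using True by (simp add: sum.inter_restrict)
  also have "\<dots> \<le> (\<Sum>i\<in>rd_act r. f i)"
    using fin by (intro sum_mono2) auto
  finally show ?thesis unfolding f_def .
qed

lemma Phi_le_m:
  assumes fin: "finite (rd_act r)" and card: "card (rd_act r) \<le> W"
    and dsh: "dom sh = rd_act r" and bnd: "\<forall>i\<in>rd_act r. the (sg i) \<le> C"
  shows "Phi sh sg \<le> C * W"
proof -
  have "Phi sh sg \<le> (\<Sum>i\<in>rd_act r. C)"
    unfolding Phi_def dsh using bnd by (intro sum_mono) auto
  also have "\<dots> = card (rd_act r) * C" by simp
  also have "\<dots> \<le> C * W" using card by simp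
  finally show ?thesis .
qed

lemma round_step:
  fixes e Y :: real and m :: nat
  assumes fin: "finite (rd_act r)" and v0: "rd_val r {} = 0"
    and v1: "\<forall>B. B \<subseteq> rd_act r \<longrightarrow> rd_val r B < 1"
    and dsh: "dom sh = rd_act r" and dsg: "dom sg = rd_act r" and fp: "feasible sg p"
    and Phim: "Phi sh sg \<le> m"
    and e0: "0 < e" and e1: "e < 1" and Ydef: "Y * ((1 - e) * e ^ m) = 1"
  shows "(payment r p - payment r (freeze sh)
            + Y * (1 - e ^ min (Phi (trans r rT sh (freeze sh)) (trans r rT sg p)) m)) * e
       + (payment r p - payment r (copyp sh p)
            + Y * (1 - e ^ min (Phi (trans r rF sh (copyp sh p)) (trans r rF sg p)) m)) * (1 - e)
       \<le> Y * (1 - e ^ min (Phi sh sg) m) + e"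
proof -
  define V where "V = (\<lambda>\<phi>::nat. Y * (1 - e ^ min \<phi> m))"
  have Ypos: "0 \<le> Y"
  proof -
    have "0 < (1 - e) * e ^ m" using e0 e1 by simp
    moreover have "Y = 1 / ((1 - e) * e ^ m)" using Ydef calculation
      by (metis nonzero_eq_divide_eq order_less_irrefl)
    ultimately show ?thesis by simp
  qed
  have Vmono: "V a \<le> V b" if "a \<le> b" for a b
  proof -
    have "e ^ min b m \<le> e ^ min a m"
      using that e0 e1 by (intro power_decreasing) auto
    then show ?thesis unfolding V_def using Ypos by (intro mult_left_mono) auto
  qed
  have Vtop: "V a \<le> Y * (1 - e ^ m)" for a
  proof -
    have "e ^ m \<le> e ^ min a m"
      using e0 e1 by (intro power_decreasing) auto
    then show ?thesis unfolding V_def using Ypos by (intro mult_left_mono) auto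
  qed
  have pos: "\<forall>i\<in>rd_act r. 0 < the (p i)" using fp dsg unfolding feasible_def by auto
  define D where "D = demand r p"
  have pp: "payment r p < 1" "0 \<le> payment r p" "\<And>i. i \<in> D \<Longrightarrow> the (p i) < 1"
    using demand_price_lt1[OF fin v0 v1 pos] unfolding D_def by auto
  have Dsub: "D \<subseteq> rd_act r" unfolding D_def by (rule demand_sub[OF fin])
  have fr: "demand r (freeze sh) = {}" "payment r (freeze sh) = 0"
    using freeze_demand[OF fin v0 v1 dsh] by auto
  have posc: "\<forall>i\<in>rd_act r. 0 < the (copyp sh p i)"
    using pos dsh by (auto simp: copyp_def)
  have pc: "0 \<le> payment r (copyp sh p)"
    using demand_price_lt1(2)[OF fin v0 v1 posc] .
  define a where "a i = the (sg i)" for i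
  define b where "b i = the (sh i)" for i
  define \<Phi> where "\<Phi> = Phi sh sg"
  have Phi_eq: "\<Phi> = (\<Sum>i\<in>rd_act r. a i - b i)" unfolding \<Phi>_def Phi_def dsh a_def b_def ..
  define \<Phi>T where "\<Phi>T = Phi (trans r rT sh (freeze sh)) (trans r rT sg p)"
  define \<Phi>F where "\<Phi>F = Phi (trans r rF sh (copyp sh p)) (trans r rF sg p)"
  have T1: "\<Phi>T \<le> (\<Sum>i\<in>rd_act r. (a i - (if i \<in> D then 1 else 0)) - b i)"
    using Phi_trans_le[OF fin dsh, of rT "freeze sh" sg p] fr(1)
    unfolding \<Phi>T_def D_def a_def b_def by simp
  have T2: "(\<Sum>i\<in>rd_act r. (a i - (if i \<in> D then 1 else 0)) - b i) \<le> \<Phi>"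
    unfolding Phi_eq by (intro sum_mono) auto
  have cT: "payment r p - payment r (freeze sh) \<le> 1" using pp fr by simp
  have cF: "payment r p - payment r (copyp sh p) \<le> 1" using pp pc by simp
  show ?thesis
  proof (cases "\<exists>i\<in>D. sh i = Some 0")
    case True
    then obtain i where i: "i \<in> D" "sh i = Some 0" by blast
    have iA: "i \<in> rd_act r" using i Dsub by blast
    have "sg i \<noteq> Some 0"
    proof
      assume "sg i = Some 0"
      then have "p i = Some 1" using fp iA dsg unfolding feasible_def by auto
      then show False using pp(3)[OF i(1)] by simp
    qed
    moreover have "i \<in> dom sg" using iA dsg by simp
    ultimately have ai: "1 \<le> a i" unfolding a_def by (cases "sg i") auto
    have bi: "b i = 0" using i unfolding b_def by simp
    have "(\<Sum>i\<in>rd_act r. (a i - (if i \<in> D then 1 else 0)) - b i) < \<Phi>"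
      unfolding Phi_eq
      apply (rule sum_strict_mono_ex1[OF fin])
       apply auto[1]
      using iA i(1) ai bi by (intro bexI[of _ i]) auto
    then have lt: "\<Phi>T < \<Phi>" using T1 by linarith
    have Phim': "\<Phi> \<le> m" using Phim unfolding \<Phi>_def .
    define q where "q = e ^ (\<Phi> - 1)"
    define E where "E = e ^ m"
    have VT: "V \<Phi>T \<le> Y * (1 - q)"
    proof -
      have "V \<Phi>T \<le> V (\<Phi> - 1)" using lt by (intro Vmono) auto
      also have "\<dots> = Y * (1 - q)" unfolding V_def q_def using Phim' lt by (simp add: min_def)
      finally show ?thesis .
    qed
    have VF: "V \<Phi>F \<le> Y * (1 - E)" unfolding E_def by (rule Vtop)
    have VP: "V \<Phi> = Y - Y * (e * q)"
    proof -
      have "\<Phi> = Suc (\<Phi> - 1)" using lt by simp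
      then have "e ^ \<Phi> = e * q" unfolding q_def by (metis power_Suc)
      then show ?thesis unfolding V_def using Phim' by (simp add: min_def algebra_simps)
    qed
    have h1: "(payment r p - payment r (freeze sh) + V \<Phi>T) * e \<le> (1 + Y * (1 - q)) * e"
      using cT VT e0 by (intro mult_right_mono) auto
    have h2: "(payment r p - payment r (copyp sh p) + V \<Phi>F) * (1 - e) \<le> (1 + Y * (1 - E)) * (1 - e)"
      using cF VF e1 by (intro mult_right_mono) auto
    have h3: "(1 + Y * (1 - q)) * e + (1 + Y * (1 - E)) * (1 - e) = Y - Y * (e * q)"
    proof -
      have H: "Y * ((1 - e) * E) = 1" using Ydef unfolding E_def .
      have "Y * E - Y * E * e = Y * ((1 - e) * E)" by (simp add: algebra_simps)
      also have "\<dots> = 1" by (rule H)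
      finally have H': "Y * E - Y * E * e = 1" .
      have X: "(1 + Y * (1 - q)) * e + (1 + Y * (1 - E)) * (1 - e)
             = 1 + Y - Y * (e * q) - (Y * E - Y * E * e)" by (simp add: algebra_simps)
      show ?thesis unfolding X H' by simp
    qed
    have "(payment r p - payment r (freeze sh) + V \<Phi>T) * e
        + (payment r p - payment r (copyp sh p) + V \<Phi>F) * (1 - e) \<le> V \<Phi> + e"
      using h1 h2 h3 VP e0 by linarith
    then show ?thesis unfolding V_def \<Phi>T_def \<Phi>F_def \<Phi>_def .
  next
    case False
    have le: "\<forall>i\<in>rd_act r. the (p i) \<le> the (copyp sh p i)"
      using fp dsg dsh unfolding feasible_def by (auto simp: copyp_def)
    have eq: "\<forall>i\<in>demand r p. copyp sh p i = p i"
      using False Dsub dsh unfolding D_def by (auto simp: copyp_def)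
    have dc: "demand r (copyp sh p) = D"
      unfolding D_def by (rule demand_raise[OF fin le eq])
    have pay: "payment r (copyp sh p) = payment r p"
      unfolding payment_def dc using eq unfolding D_def by (auto intro!: sum.cong)
    have F1: "\<Phi>F \<le> (\<Sum>i\<in>rd_act r. (a i - (if i \<in> D then 1 else 0)) - (b i - (if i \<in> D then 1 else 0)))"
      using Phi_trans_le[OF fin dsh, of rF "copyp sh p" sg p] dc
      unfolding \<Phi>F_def D_def a_def b_def by simp
    have F2: "(\<Sum>i\<in>rd_act r. (a i - (if i \<in> D then 1 else 0)) - (b i - (if i \<in> D then 1 else 0))) \<le> \<Phi>"
      unfolding Phi_eq by (intro sum_mono) auto
    have VT: "V \<Phi>T \<le> V \<Phi>" using T1 T2 by (intro Vmono) linarith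
    have VF: "V \<Phi>F \<le> V \<Phi>" using F1 F2 by (intro Vmono) linarith
    have h1: "(payment r p - payment r (freeze sh) + V \<Phi>T) * e \<le> (1 + V \<Phi>) * e"
      using cT VT e0 by (intro mult_right_mono) auto
    have h2: "(payment r p - payment r (copyp sh p) + V \<Phi>F) * (1 - e) \<le> V \<Phi> * (1 - e)"
      using pay VF e1 by (intro mult_right_mono) auto
    have "(payment r p - payment r (freeze sh) + V \<Phi>T) * e
        + (payment r p - payment r (copyp sh p) + V \<Phi>F) * (1 - e) \<le> V \<Phi> + e"
      using h1 h2 by (simp add: algebra_simps)
    then show ?thesis unfolding V_def \<Phi>T_def \<Phi>F_def \<Phi>_def .
  qed
qed

lemma trans_cong:
  assumes "rd_act r1 = rd_act r2" "\<forall>i\<in>rd_act r1 - rd_act r. rd_cap r1 i = rd_cap r2 i"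
  shows "trans r r1 s p = trans r r2 s p"
  using assms unfolding trans_def by (auto intro!: ext)

lemma pol_state_cong:
  "(\<forall>\<tau>. 1 \<le> \<tau> \<and> \<tau> \<le> Suc n \<longrightarrow> d \<tau> = d' \<tau>) \<Longrightarrow> pol_state d \<gamma> n = pol_state d' \<gamma> n"
proof (induction n)
  case 0 then show ?case by simp
next
  case (Suc n)
  then have "pol_state d \<gamma> n = pol_state d' \<gamma> n" by simp
  moreover have "d (Suc n) = d' (Suc n)" "d (Suc (Suc n)) = d' (Suc (Suc n))" using Suc.prems by auto
  ultimately show ?case by simp
qed

lemma pol_state_cong2:
  assumes "\<forall>\<tau>. 1 \<le> \<tau> \<and> \<tau> \<le> Suc n \<longrightarrow> d \<tau> = d' \<tau>"
    "rd_act (d (Suc (Suc n))) = rd_act (d' (Suc (Suc n)))"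
    "\<forall>i\<in>rd_act (d (Suc (Suc n))) - rd_act (d (Suc n)). rd_cap (d (Suc (Suc n))) i = rd_cap (d' (Suc (Suc n))) i"
  shows "pol_state d \<gamma> (Suc n) = pol_state d' \<gamma> (Suc n)"
proof -
  have a: "pol_state d \<gamma> n = pol_state d' \<gamma> n" by (rule pol_state_cong) (use assms(1) in auto)
  have b: "d (Suc n) = d' (Suc n)" using assms(1) by auto
  show ?thesis
    apply (simp only: pol_state.simps a b[symmetric])
    apply (rule trans_cong)
    using assms(2,3) b by auto
qed

lemma valid_D:
  assumes "valid_instance C W T d"
  shows valid_fin: "t \<in> {1..T} \<Longrightarrow> finite (rd_act (d t))"
    and valid_card: "t \<in> {1..T} \<Longrightarrow> card (rd_act (d t)) \<le> W"
    and valid_arr: "t \<in> {1..T} \<Longrightarrow> i \<in> rd_act (d t) \<Longrightarrow> t = 1 \<or> i \<notin> rd_act (d (t - 1)) \<Longrightarrow> rd_cap (d t) i \<le> C"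
    and valid_v0: "t \<in> {1..T} \<Longrightarrow> rd_val (d t) {} = 0"
    and valid_v1: "t \<in> {1..T} \<Longrightarrow> B \<subseteq> rd_act (d t) \<Longrightarrow> rd_val (d t) B < 1"
  using assms unfolding valid_instance_def by blast+

lemma pol_state_le_C:
  assumes v: "valid_instance C W T d"
  shows "Suc n \<le> T \<Longrightarrow> \<forall>i\<in>dom (pol_state d \<gamma> n). the (pol_state d \<gamma> n i) \<le> C"
proof (induction n)
  case 0
  have "rd_cap (d 1) i \<le> C" if "i \<in> rd_act (d 1)" for i
    using valid_arr[OF v, of 1 i] that 0 by simp
  then show ?case unfolding pol_state.simps dom_init_state by (simp add: init_state_def)
next
  case (Suc n)
  have IH: "\<forall>i\<in>rd_act (d (Suc n)). the (pol_state d \<gamma> n i) \<le> C"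
    using Suc by (simp add: dom_pol_state)
  have arr: "rd_cap (d (Suc (Suc n))) i \<le> C"
    if "i \<in> rd_act (d (Suc (Suc n)))" "i \<notin> rd_act (d (Suc n))" for i
    using valid_arr[OF v, of "Suc (Suc n)" i] that Suc.prems by simp
  show ?case
  proof
    fix i assume "i \<in> dom (pol_state d \<gamma> (Suc n))"
    then have i: "i \<in> rd_act (d (Suc (Suc n)))" using dom_pol_state[of d \<gamma> "Suc n"] by blast
    show "the (pol_state d \<gamma> (Suc n) i) \<le> C"
    proof (cases "i \<in> rd_act (d (Suc n))")
      case True
      then have "the (pol_state d \<gamma> n i) \<le> C" using IH by blast
      then show ?thesis using i True by (simp add: trans_def)
    next
      case False
      then show ?thesis using i arr[OF i False] by (simp add: trans_def)
    qed
  qed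
qed

definition fake :: "inv \<Rightarrow> round_data" where
  "fake s = (| rd_act = dom s, rd_cap = (\<lambda>i. the (s i)), rd_val = (\<lambda>_. 0) |)"
definition dfake :: "nat \<Rightarrow> round_data list \<Rightarrow> inv \<Rightarrow> nat \<Rightarrow> round_data" where
  "dfake t hist s \<tau> = (if \<tau> < t then hist ! (\<tau> - 1) else fake s)"
definition est :: "(inv \<Rightarrow> prices) \<Rightarrow> nat \<Rightarrow> round_data list \<Rightarrow> inv \<Rightarrow> inv" where
  "est \<gamma> t hist s = pol_state (dfake t hist s) \<gamma> (t - 1)"
definition strat :: "(inv \<Rightarrow> prices) \<Rightarrow> nat \<Rightarrow> bool list \<Rightarrow> strategy" where
  "strat \<gamma> t0 cs t hist s =
     (if t = t0 \<or> cs ! (t - t0) then freeze s else copyp s (\<gamma> (est \<gamma> t hist s)))"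

lemma dom_est: "1 \<le> t \<Longrightarrow> dom (est \<gamma> t hist s) = dom s"
  unfolding est_def dom_pol_state by (simp add: dfake_def fake_def)

lemma strat_feasible:
  assumes "\<forall>s. feasible s (\<gamma> s)" "1 \<le> t"
  shows "feasible s (strat \<gamma> t0 cs t hist s)"
proof -
  have "feasible s (copyp s (\<gamma> (est \<gamma> t hist s)))"
    using feasible_copyp[OF dom_est[OF assms(2)]] assms(1) by blast
  then show ?thesis unfolding strat_def using feasible_freeze by auto
qed

locale chase_setup =
  fixes C W T :: nat and \<gamma> :: "inv \<Rightarrow> prices" and t0 :: nat and s0 :: inv and adv :: adversary
  assumes gfeas: "\<forall>s. feasible s (\<gamma> s)" and t01: "1 \<le> t0" and t0T: "t0 \<le> T"
    and dom0: "rd_act (adv t0 []) = dom s0"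
    and valid: "\<forall>xs. length xs = Suc T - t0 \<longrightarrow> valid_instance C W T (rdata adv t0 xs)"
begin

abbreviation H where "H \<omega> k \<equiv> ohist \<omega> adv t0 s0 k"
definition xsk where "xsk \<omega> k = snd (H \<omega> k)"
definition dk where "dk \<omega> k = rdata adv t0 (xsk \<omega> k)"
definition act_at where
  "act_at \<omega> k = \<omega> (t0 + k) (map (rdata adv t0 (xsk \<omega> k)) [1..<t0 + k]) (fst (H \<omega> k))"
definition tgt where "tgt \<omega> k = target_state (dk \<omega> k) \<gamma> (t0 + k)"

lemma H_Suc: "H \<omega> (Suc k) =
   (trans (adv (t0 + k) (xsk \<omega> k)) (adv (Suc (t0 + k)) (xsk \<omega> k @ [act_at \<omega> k])) (fst (H \<omega> k)) (act_at \<omega> k),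
    xsk \<omega> k @ [act_at \<omega> k])"
  by (simp add: xsk_def act_at_def Let_def)

lemma xsk_Suc: "xsk \<omega> (Suc k) = xsk \<omega> k @ [act_at \<omega> k]"
  using H_Suc[of \<omega> k] by (simp add: xsk_def)

lemma len_xsk: "length (xsk \<omega> k) = k"
  by (induction k) (auto simp: xsk_Suc, simp add: xsk_def)

lemma xsk_take: "k \<le> j \<Longrightarrow> xsk \<omega> k = take k (xsk \<omega> j)"
proof (induction j)
  case 0 then show ?case using len_xsk[of \<omega> 0] by simp
next
  case (Suc j)
  show ?case
  proof (cases "k = Suc j")
    case True then show ?thesis by (simp add: len_xsk)
  next
    case False
    then have "k \<le> j" using Suc.prems by simp
    then show ?thesis using Suc.IH by (simp add: xsk_Suc len_xsk)
  qed
qed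

lemma dk_at: "dk \<omega> k (t0 + k) = adv (t0 + k) (xsk \<omega> k)"
  by (simp add: dk_def rdata_def len_xsk)

lemma dk_agree: "k \<le> j \<Longrightarrow> \<tau> \<le> t0 + k \<Longrightarrow> dk \<omega> j \<tau> = dk \<omega> k \<tau>"
  unfolding dk_def rdata_def using xsk_take[of k j \<omega>] by (simp add: min_def)

lemma fst_H_Suc: "fst (H \<omega> (Suc k)) =
   trans (dk \<omega> k (t0 + k)) (dk \<omega> (Suc k) (Suc (t0 + k))) (fst (H \<omega> k)) (act_at \<omega> k)"
proof -
  have e2: "dk \<omega> (Suc k) (Suc (t0 + k)) = adv (Suc (t0 + k)) (xsk \<omega> k @ [act_at \<omega> k])"
    using dk_at[of \<omega> "Suc k"] unfolding xsk_Suc by simp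
  have "fst (H \<omega> (Suc k)) = trans (adv (t0 + k) (xsk \<omega> k)) (adv (Suc (t0 + k)) (xsk \<omega> k @ [act_at \<omega> k]))
      (fst (H \<omega> k)) (act_at \<omega> k)"
    using H_Suc[of \<omega> k] by (simp only: fst_conv)
  then show ?thesis unfolding e2 dk_at .
qed

lemma dom_H: "dom (fst (H \<omega> k)) = rd_act (dk \<omega> k (t0 + k))"
proof (cases k)
  case 0 then show ?thesis using dom0 by (simp add: dk_def rdata_def)
next
  case (Suc k') then show ?thesis unfolding Suc fst_H_Suc dom_trans by simp
qed

lemma H_arrival:
  assumes "i \<in> rd_act (dk \<omega> (Suc k) (t0 + Suc k))" "i \<notin> rd_act (dk \<omega> (Suc k) (t0 + k))"
  shows "fst (H \<omega> (Suc k)) i = Some (rd_cap (dk \<omega> (Suc k) (t0 + Suc k)) i)"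
proof -
  have "dk \<omega> (Suc k) (t0 + k) = dk \<omega> k (t0 + k)" by (rule dk_agree) auto
  then show ?thesis using assms unfolding fst_H_Suc by (simp add: trans_def)
qed

lemma H_cong: "(\<forall>j<k. \<omega> (t0 + j) = \<omega>' (t0 + j)) \<Longrightarrow> H \<omega> k = H \<omega>' k"
  by (induction k) (auto simp: Let_def)

lemma est_correct:
  assumes k1: "1 \<le> k"
  shows "est \<gamma> (t0 + k) (map (rdata adv t0 (xsk \<omega> k)) [1..<t0 + k]) (fst (H \<omega> k)) = tgt \<omega> k"
proof -
  obtain k' where kk: "k = Suc k'" using k1 by (cases k) auto
  define t where "t = t0 + k"
  define n where "n = t - 2"
  have tn: "t - 1 = Suc n" "t = Suc (Suc n)" using t01 k1 unfolding t_def n_def by arith+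
  define hist where "hist = map (rdata adv t0 (xsk \<omega> k)) [1..<t]"
  define s where "s = fst (H \<omega> k)"
  have f1: "Suc (Suc n) = t0 + k" using tn(2) unfolding t_def by linarith
  have f2: "dfake t hist s (Suc (Suc n)) = fake s" unfolding dfake_def using tn(2) by simp
  have e2: "Suc n = t0 + k'" using f1 kk by simp
  have 1: "\<forall>\<tau>. 1 \<le> \<tau> \<and> \<tau> \<le> Suc n \<longrightarrow> dfake t hist s \<tau> = dk \<omega> k \<tau>"
  proof (intro allI impI)
    fix \<tau> assume "1 \<le> \<tau> \<and> \<tau> \<le> Suc n"
    then have "\<tau> < t" "1 \<le> \<tau>" using tn(2) by linarith+
    then show "dfake t hist s \<tau> = dk \<omega> k \<tau>"
      unfolding dfake_def hist_def dk_def by (simp add: nth_upt)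
  qed
  have dsk: "dom s = rd_act (dk \<omega> k (t0 + k))" unfolding s_def by (rule dom_H)
  have 2: "rd_act (dfake t hist s (Suc (Suc n))) = rd_act (dk \<omega> k (Suc (Suc n)))"
    unfolding f2 unfolding f1 by (simp add: fake_def dsk)
  have 3: "\<forall>i\<in>rd_act (dfake t hist s (Suc (Suc n))) - rd_act (dfake t hist s (Suc n)).
      rd_cap (dfake t hist s (Suc (Suc n))) i = rd_cap (dk \<omega> k (Suc (Suc n))) i"
  proof
    fix i assume i: "i \<in> rd_act (dfake t hist s (Suc (Suc n))) - rd_act (dfake t hist s (Suc n))"
    have a: "i \<in> rd_act (dk \<omega> (Suc k') (t0 + Suc k'))" using i 2 unfolding f1 kk by blast
    have e1: "dfake t hist s (Suc n) = dk \<omega> k (Suc n)" using 1 by simp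
    have b: "i \<notin> rd_act (dk \<omega> (Suc k') (t0 + k'))" using i unfolding e1 unfolding e2 kk by blast
    have "s i = Some (rd_cap (dk \<omega> (Suc k') (t0 + Suc k')) i)" unfolding s_def kk by (rule H_arrival[OF a b])
    then show "rd_cap (dfake t hist s (Suc (Suc n))) i = rd_cap (dk \<omega> k (Suc (Suc n))) i"
      unfolding f2 unfolding f1 kk by (simp add: fake_def)
  qed
  have "pol_state (dfake t hist s) \<gamma> (Suc n) = pol_state (dk \<omega> k) \<gamma> (Suc n)"
    by (rule pol_state_cong2[OF 1 2 3])
  then have "est \<gamma> t hist s = tgt \<omega> k"
    unfolding est_def tgt_def target_state_def t_def[symmetric] tn(1) .
  then show ?thesis unfolding hist_def s_def t_def .
qed

end

lemma pmf_exp_le: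
  fixes f g :: "'a \<Rightarrow> real"
  assumes "finite (set_pmf M)" "\<And>x. x \<in> set_pmf M \<Longrightarrow> f x \<le> g x"
  shows "measure_pmf.expectation M f \<le> measure_pmf.expectation M g"
  by (rule integral_mono_AE) (auto intro!: integrable_measure_pmf_finite AE_pmfI assms)

lemma pmf_exp_add_const:
  fixes f :: "'a \<Rightarrow> real"
  assumes "finite (set_pmf M)"
  shows "measure_pmf.expectation M (\<lambda>x. f x + c) = measure_pmf.expectation M f + c"
proof -
  have "measure_pmf.expectation M (\<lambda>x. f x + c) = measure_pmf.expectation M f + measure_pmf.expectation M (\<lambda>x. c)"
    by (rule Bochner_Integration.integral_add) (auto intro!: integrable_measure_pmf_finite assms)
  then show ?thesis by simp
qed

lemma pmf_exp_const:
  fixes c :: real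
  shows "measure_pmf.expectation M (\<lambda>x. c) = c"
  by simp

context chase_setup
begin

definition agree where "agree \<omega> \<omega>' k \<longleftrightarrow> (\<forall>j<k. \<omega> (t0 + j) = \<omega>' (t0 + j))"

lemma agree_mono: "agree \<omega> \<omega>' k \<Longrightarrow> j \<le> k \<Longrightarrow> agree \<omega> \<omega>' j"
  unfolding agree_def by auto

lemma agree_H: "agree \<omega> \<omega>' k \<Longrightarrow> H \<omega> k = H \<omega>' k"
  unfolding agree_def by (rule H_cong)

lemma agree_xsk: "agree \<omega> \<omega>' k \<Longrightarrow> xsk \<omega> k = xsk \<omega>' k"
  unfolding xsk_def using agree_H by simp

lemma agree_dk: "agree \<omega> \<omega>' k \<Longrightarrow> dk \<omega> k = dk \<omega>' k"
  unfolding dk_def using agree_xsk by simp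

lemma agree_tgt: "agree \<omega> \<omega>' k \<Longrightarrow> tgt \<omega> k = tgt \<omega>' k"
  unfolding tgt_def using agree_dk by simp

lemma agree_act_at: "agree \<omega> \<omega>' (Suc j) \<Longrightarrow> act_at \<omega> j = act_at \<omega>' j"
proof -
  assume a: "agree \<omega> \<omega>' (Suc j)"
  then have "agree \<omega> \<omega>' j" by (rule agree_mono) simp
  moreover have "\<omega> (t0 + j) = \<omega>' (t0 + j)" using a unfolding agree_def by simp
  ultimately show ?thesis unfolding act_at_def using agree_H agree_xsk by simp
qed

lemma tgt_Suc:
  "tgt \<omega> (Suc k) = trans (dk \<omega> k (t0 + k)) (dk \<omega> (Suc k) (Suc (t0 + k))) (tgt \<omega> k) (\<gamma> (tgt \<omega> k))"
proof -
  define n where "n = t0 + k - 1"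
  have tn: "t0 + k = Suc n" using t01 unfolding n_def by simp
  have a: "dk \<omega> (Suc k) (Suc n) = dk \<omega> k (Suc n)" unfolding tn[symmetric] by (rule dk_agree) auto
  have b: "pol_state (dk \<omega> (Suc k)) \<gamma> n = pol_state (dk \<omega> k) \<gamma> n"
    by (rule pol_state_cong) (auto intro!: dk_agree simp: tn[symmetric])
  have "tgt \<omega> (Suc k) = pol_state (dk \<omega> (Suc k)) \<gamma> (Suc n)"
    unfolding tgt_def target_state_def using tn by simp
  also have "\<dots> = trans (dk \<omega> k (Suc n)) (dk \<omega> (Suc k) (Suc (Suc n))) (pol_state (dk \<omega> k) \<gamma> n)
                     (\<gamma> (pol_state (dk \<omega> k) \<gamma> n))"
    unfolding pol_state.simps a b ..
  also have "pol_state (dk \<omega> k) \<gamma> n = tgt \<omega> k"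
    unfolding tgt_def target_state_def using tn by simp
  finally show ?thesis unfolding tn .
qed

lemma xsk_nth: "j < k \<Longrightarrow> xsk \<omega> k ! j = act_at \<omega> j"
proof -
  assume "j < k"
  then have "xsk \<omega> (Suc j) = take (Suc j) (xsk \<omega> k)" by (intro xsk_take) simp
  then have "xsk \<omega> k ! j = xsk \<omega> (Suc j) ! j" by simp
  also have "\<dots> = act_at \<omega> j" unfolding xsk_Suc by (simp add: nth_append len_xsk)
  finally show ?thesis .
qed

abbreviation "nR \<equiv> Suc T - t0"

definition extl :: "prices list \<Rightarrow> prices list" where
  "extl xs = xs @ replicate (nR - length xs) undefined"

lemma valid_k: "k \<le> nR \<Longrightarrow> valid_instance C W T (rdata adv t0 (extl (xsk \<omega> k)))"
  using valid unfolding extl_def by (simp add: len_xsk)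

lemma ext_agree: "\<tau> \<le> t0 + k \<Longrightarrow> rdata adv t0 (extl (xsk \<omega> k)) \<tau> = dk \<omega> k \<tau>"
  unfolding extl_def dk_def rdata_def by (simp add: len_xsk)

lemma round_facts:
  assumes k: "k < nR"
  shows "finite (rd_act (dk \<omega> k (t0 + k)))" "card (rd_act (dk \<omega> k (t0 + k))) \<le> W"
    "rd_val (dk \<omega> k (t0 + k)) {} = 0"
    "\<forall>B. B \<subseteq> rd_act (dk \<omega> k (t0 + k)) \<longrightarrow> rd_val (dk \<omega> k (t0 + k)) B < 1"
    "dom (tgt \<omega> k) = rd_act (dk \<omega> k (t0 + k))"
    "\<forall>i\<in>rd_act (dk \<omega> k (t0 + k)). the (tgt \<omega> k i) \<le> C"
proof -
  define DE where "DE = rdata adv t0 (extl (xsk \<omega> k))"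
  have v: "valid_instance C W T DE" unfolding DE_def using k by (intro valid_k) simp
  have tT: "t0 + k \<in> {1..T}" using k t01 by auto
  have r: "DE (t0 + k) = dk \<omega> k (t0 + k)" unfolding DE_def by (rule ext_agree) simp
  show "finite (rd_act (dk \<omega> k (t0 + k)))" using valid_fin[OF v tT] r by simp
  show "card (rd_act (dk \<omega> k (t0 + k))) \<le> W" using valid_card[OF v tT] r by simp
  show "rd_val (dk \<omega> k (t0 + k)) {} = 0" using valid_v0[OF v tT] r by simp
  show "\<forall>B. B \<subseteq> rd_act (dk \<omega> k (t0 + k)) \<longrightarrow> rd_val (dk \<omega> k (t0 + k)) B < 1"
    using valid_v1[OF v tT] r by simp
  define n where "n = t0 + k - 1"
  have tn: "t0 + k = Suc n" using t01 unfolding n_def by simp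
  have tg: "tgt \<omega> k = pol_state DE \<gamma> n"
    unfolding tgt_def target_state_def tn
    by (simp, rule pol_state_cong) (auto simp: DE_def ext_agree tn[symmetric])
  show dt: "dom (tgt \<omega> k) = rd_act (dk \<omega> k (t0 + k))"
    unfolding tgt_def target_state_def dom_pol_state using tn by simp
  have "\<forall>i\<in>dom (pol_state DE \<gamma> n). the (pol_state DE \<gamma> n i) \<le> C"
    by (rule pol_state_le_C[OF v]) (use tT tn in simp)
  then show "\<forall>i\<in>rd_act (dk \<omega> k (t0 + k)). the (tgt \<omega> k i) \<le> C"
    using dt tg by simp
qed

end

locale chase_pot = chase_setup +
  fixes e Y :: real and m :: nat
  assumes e0: "0 < e" and e1: "e < 1" and Ydef: "Y * ((1 - e) * e ^ m) = 1" and mdef: "m = C * W"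
begin

definition cost where
  "cost \<omega> j = payment (dk \<omega> j (t0 + j)) (\<gamma> (tgt \<omega> j)) - payment (dk \<omega> j (t0 + j)) (act_at \<omega> j)"

definition Pot where
  "Pot \<omega> k = (\<Sum>j<k. cost \<omega> j) + Y * (1 - e ^ min (Phi (fst (H \<omega> k)) (tgt \<omega> k)) m)"

lemma Ypos: "0 \<le> Y"
proof -
  have c: "0 < (1 - e) * e ^ m" using e0 e1 by simp
  moreover have "Y = 1 / ((1 - e) * e ^ m)" using Ydef c
    by (metis nonzero_eq_divide_eq order_less_irrefl)
  ultimately show ?thesis by simp
qed

lemma V_bounds: "0 \<le> Y * (1 - e ^ x)" "Y * (1 - e ^ x) \<le> Y"
proof -
  have "e ^ x \<le> 1" "0 \<le> e ^ x" using e0 e1 by (auto intro: power_le_one)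
  then show "0 \<le> Y * (1 - e ^ x)" "Y * (1 - e ^ x) \<le> Y" using Ypos by (auto simp: mult_left_le)
qed

lemma agree_cost: "agree \<omega> \<omega>' (Suc j) \<Longrightarrow> cost \<omega> j = cost \<omega>' j"
proof -
  assume a: "agree \<omega> \<omega>' (Suc j)"
  then have b: "agree \<omega> \<omega>' j" by (rule agree_mono) simp
  show ?thesis unfolding cost_def using agree_dk[OF b] agree_tgt[OF b] agree_act_at[OF a] by simp
qed

lemma agree_sum_cost: "agree \<omega> \<omega>' k \<Longrightarrow> (\<Sum>j<k. cost \<omega> j) = (\<Sum>j<k. cost \<omega>' j)"
  by (rule sum.cong) (auto intro!: agree_cost elim: agree_mono)

lemma strat_snoc_agree: "length cs = k \<Longrightarrow> agree (strat \<gamma> t0 (cs @ [b])) (strat \<gamma> t0 cs) k"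
  unfolding agree_def by (auto simp: strat_def nth_append intro!: ext)

lemma strat_take_agree: "agree (strat \<gamma> t0 cs) (strat \<gamma> t0 (take k cs)) k"
  unfolding agree_def by (auto simp: strat_def intro!: ext)

lemma pot_first: "Pot (strat \<gamma> t0 cs) (Suc 0) \<le> 1 + Y"
proof -
  define \<omega> where "\<omega> = strat \<gamma> t0 cs"
  have k: "0 < nR" using t0T by simp
  define r where "r = dk \<omega> 0 (t0 + 0)"
  note rf = round_facts[OF k, of \<omega>, folded r_def]
  have ds0: "dom s0 = rd_act r" using dom_H[of \<omega> 0] unfolding r_def by simp
  have aa: "act_at \<omega> 0 = freeze s0" unfolding act_at_def \<omega>_def by (simp add: strat_def)
  have fe: "feasible (tgt \<omega> 0) (\<gamma> (tgt \<omega> 0))" using gfeas by simp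
  have pos: "\<forall>i\<in>rd_act r. 0 < the (\<gamma> (tgt \<omega> 0) i)"
    using fe rf(5) unfolding feasible_def by auto
  have p1: "payment r (\<gamma> (tgt \<omega> 0)) < 1" using demand_price_lt1(1)[OF rf(1,3,4) pos] .
  have p2: "payment r (freeze s0) = 0" using freeze_demand(2)[OF rf(1,3,4) ds0] .
  have "cost \<omega> 0 \<le> 1" unfolding cost_def aa using p1 p2 unfolding r_def by simp
  moreover have "Pot \<omega> (Suc 0) \<le> (\<Sum>j<Suc 0. cost \<omega> j) + Y"
    unfolding Pot_def by (rule add_left_mono) (rule V_bounds(2))
  ultimately show ?thesis unfolding \<omega>_def by simp
qed

lemma pot_step:
  assumes k1: "1 \<le> k" and kn: "k < nR" and len: "length cs = k"
  shows "Pot (strat \<gamma> t0 (cs @ [True])) (Suc k) * e + Pot (strat \<gamma> t0 (cs @ [False])) (Suc k) * (1 - e)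
           \<le> Pot (strat \<gamma> t0 cs) k + e"
proof -
  define \<omega> where "\<omega> = strat \<gamma> t0 cs"
  define \<omega>b where "\<omega>b b = strat \<gamma> t0 (cs @ [b])" for b
  define r where "r = dk \<omega> k (t0 + k)"
  define sh where "sh = fst (H \<omega> k)"
  define sg where "sg = tgt \<omega> k"
  define p where "p = \<gamma> sg"
  define A where "A b = (if b then freeze sh else copyp sh p)" for b
  define r' where "r' b = dk (\<omega>b b) (Suc k) (Suc (t0 + k))" for b
  define S where "S = (\<Sum>j<k. cost \<omega> j)"
  note rf = round_facts[OF kn, of \<omega>, folded r_def sg_def]
  have ag: "agree (\<omega>b b) \<omega> k" for b unfolding \<omega>b_def \<omega>_def by (rule strat_snoc_agree[OF len])
  have Hb: "H (\<omega>b b) k = H \<omega> k" for b using agree_H[OF ag] .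
  have dkb: "dk (\<omega>b b) k = dk \<omega> k" for b using agree_dk[OF ag] .
  have tgb: "tgt (\<omega>b b) k = sg" for b using agree_tgt[OF ag] unfolding sg_def .
  have Sb: "(\<Sum>j<k. cost (\<omega>b b) j) = S" for b using agree_sum_cost[OF ag] unfolding S_def .
  have ne: "t0 + k \<noteq> t0" using k1 by simp
  have est: "est \<gamma> (t0 + k) (map (rdata adv t0 (xsk (\<omega>b b) k)) [1..<t0 + k]) (fst (H (\<omega>b b) k)) = sg" for b
    using est_correct[OF k1, of "\<omega>b b"] tgb by simp
  have actb: "act_at (\<omega>b b) k = A b" for b
  proof (cases b)
    case True
    then show ?thesis unfolding act_at_def using ne len Hb[of True]
      by (simp add: \<omega>b_def strat_def nth_append A_def sh_def)
  next
    case False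
    have X: "act_at (\<omega>b False) k = copyp (fst (H (\<omega>b False) k)) (\<gamma> (est \<gamma> (t0 + k) (map (rdata adv t0 (xsk (\<omega>b False) k)) [1..<t0 + k]) (fst (H (\<omega>b False) k))))"
      unfolding act_at_def using ne len by (simp add: \<omega>b_def strat_def nth_append)
    have "act_at (\<omega>b False) k = A False" using X unfolding est unfolding Hb by (simp add: A_def sh_def p_def)
    then show ?thesis using False by simp
  qed
  have costb: "cost (\<omega>b b) k = payment r p - payment r (A b)" for b
    unfolding cost_def dkb tgb actb r_def p_def ..
  have Hsb: "fst (H (\<omega>b b) (Suc k)) = trans r (r' b) sh (A b)" for b
    unfolding fst_H_Suc dkb Hb actb r'_def r_def sh_def ..
  have tsb: "tgt (\<omega>b b) (Suc k) = trans r (r' b) sg p" for b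
    unfolding tgt_Suc dkb tgb r'_def r_def p_def ..
  have potb: "Pot (\<omega>b b) (Suc k) = S + (payment r p - payment r (A b)
      + Y * (1 - e ^ min (Phi (trans r (r' b) sh (A b)) (trans r (r' b) sg p)) m))" for b
    unfolding Pot_def sum.lessThan_Suc Sb costb Hsb tsb by simp
  have dsh: "dom sh = rd_act r" unfolding sh_def r_def by (rule dom_H)
  have fp: "feasible sg p" unfolding p_def using gfeas by simp
  have Phim: "Phi sh sg \<le> m" unfolding mdef
    by (rule Phi_le_m[OF rf(1) rf(2) dsh]) (use rf(6) in simp)
  note RS = round_step[OF rf(1) rf(3) rf(4) dsh rf(5) fp Phim e0 e1 Ydef, of "r' True" "r' False"]
  have "Pot (\<omega>b True) (Suc k) * e + Pot (\<omega>b False) (Suc k) * (1 - e)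
      = S + ((payment r p - payment r (freeze sh)
            + Y * (1 - e ^ min (Phi (trans r (r' True) sh (freeze sh)) (trans r (r' True) sg p)) m)) * e
       + (payment r p - payment r (copyp sh p)
            + Y * (1 - e ^ min (Phi (trans r (r' False) sh (copyp sh p)) (trans r (r' False) sg p)) m)) * (1 - e))"
    unfolding potb A_def by (simp add: algebra_simps)
  also have "\<dots> \<le> S + (Y * (1 - e ^ min (Phi sh sg) m) + e)" using RS by simp
  also have "\<dots> = Pot \<omega> k + e" unfolding Pot_def S_def sh_def sg_def by simp
  finally show ?thesis unfolding \<omega>b_def \<omega>_def .
qed

end

context chase_setup
begin

lemma oa_eq: "oracle_actions \<omega> adv t0 s0 T = xsk \<omega> nR"
  unfolding oracle_actions_def xsk_def ..

lemma feas_part: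
  assumes "k < nR"
  shows "feasible (fst (H (strat \<gamma> t0 cs) k)) (oracle_actions (strat \<gamma> t0 cs) adv t0 s0 T ! k)"
proof -
  have "oracle_actions (strat \<gamma> t0 cs) adv t0 s0 T ! k = act_at (strat \<gamma> t0 cs) k"
    unfolding oa_eq using assms by (rule xsk_nth)
  moreover have "feasible (fst (H (strat \<gamma> t0 cs) k)) (act_at (strat \<gamma> t0 cs) k)"
    unfolding act_at_def by (rule strat_feasible[OF gfeas]) (use t01 in simp)
  ultimately show ?thesis by simp
qed

end

context chase_pot
begin

lemma exp_pot: "k \<le> nR \<Longrightarrow> measure_pmf.expectation (coins e k) (\<lambda>cs. Pot (strat \<gamma> t0 cs) k) \<le> 1 + Y + real k * e"
proof (induction k)
  case 0
  have "Pot (strat \<gamma> t0 []) 0 \<le> Y" unfolding Pot_def using V_bounds(2) by simp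
  then show ?case by simp
next
  case (Suc k)
  have e01: "0 \<le> e" "e \<le> 1" using e0 e1 by auto
  have st: "measure_pmf.expectation (coins e (Suc k)) (\<lambda>cs. Pot (strat \<gamma> t0 cs) (Suc k))
     = measure_pmf.expectation (coins e k) (\<lambda>cs. e * Pot (strat \<gamma> t0 (cs @ [True])) (Suc k)
          + (1 - e) * Pot (strat \<gamma> t0 (cs @ [False])) (Suc k))"
    by (rule coins_step[OF e01])
  show ?case
  proof (cases "k = 0")
    case True
    have "measure_pmf.expectation (coins e k) (\<lambda>cs. e * Pot (strat \<gamma> t0 (cs @ [True])) (Suc k)
          + (1 - e) * Pot (strat \<gamma> t0 (cs @ [False])) (Suc k))
        \<le> measure_pmf.expectation (coins e k) (\<lambda>cs. 1 + Y)"
    proof (rule pmf_exp_le[OF coins_finite])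
      fix cs
      have a: "e * Pot (strat \<gamma> t0 (cs @ [True])) (Suc k) \<le> e * (1 + Y)"
        using pot_first e01 True by (intro mult_left_mono) auto
      have b: "(1 - e) * Pot (strat \<gamma> t0 (cs @ [False])) (Suc k) \<le> (1 - e) * (1 + Y)"
        using pot_first e01 True by (intro mult_left_mono) auto
      show "e * Pot (strat \<gamma> t0 (cs @ [True])) (Suc k) + (1 - e) * Pot (strat \<gamma> t0 (cs @ [False])) (Suc k) \<le> 1 + Y"
        using a b by (simp add: algebra_simps)
    qed
    then show ?thesis unfolding st using True e0 by simp
  next
    case False
    have kn: "k < nR" using Suc.prems by simp
    have "measure_pmf.expectation (coins e k) (\<lambda>cs. e * Pot (strat \<gamma> t0 (cs @ [True])) (Suc k)
          + (1 - e) * Pot (strat \<gamma> t0 (cs @ [False])) (Suc k))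
        \<le> measure_pmf.expectation (coins e k) (\<lambda>cs. Pot (strat \<gamma> t0 cs) k + e)"
    proof (rule pmf_exp_le[OF coins_finite])
      fix cs assume "cs \<in> set_pmf (coins e k)"
      then have len: "length cs = k" by (rule coins_set)
      have k1: "1 \<le> k" using False by simp
      show "e * Pot (strat \<gamma> t0 (cs @ [True])) (Suc k) + (1 - e) * Pot (strat \<gamma> t0 (cs @ [False])) (Suc k)
           \<le> Pot (strat \<gamma> t0 cs) k + e"
        using pot_step[OF k1 kn len] by (simp add: algebra_simps)
    qed
    also have "\<dots> = measure_pmf.expectation (coins e k) (\<lambda>cs. Pot (strat \<gamma> t0 cs) k) + e"
      by (rule pmf_exp_add_const[OF coins_finite])
    also have "\<dots> \<le> 1 + Y + real k * e + e" using Suc.IH kn by simp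
    finally show ?thesis unfolding st by (simp add: algebra_simps)
  qed
qed

lemma gap_eq:
  assumes "t0 \<le> tf" "tf \<le> T"
  shows "chase_gap \<gamma> \<omega> adv t0 s0 T tf = (\<Sum>j<Suc (tf - t0). cost \<omega> j)"
proof -
  have "chase_gap \<gamma> \<omega> adv t0 s0 T tf
      = (\<Sum>t\<in>{t0..tf}. payment (dk \<omega> nR t) (\<gamma> (target_state (dk \<omega> nR) \<gamma> t))
                       - payment (dk \<omega> nR t) (xsk \<omega> nR ! (t - t0)))"
    unfolding chase_gap_def Let_def oa_eq dk_def ..
  also have "\<dots> = (\<Sum>t\<in>{t0..tf}. cost \<omega> (t - t0))"
  proof (rule sum.cong[OF refl])
    fix t assume t: "t \<in> {t0..tf}"
    define j where "j = t - t0"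
    have tj: "t = t0 + j" using t unfolding j_def by simp
    have jn: "j < nR" using t assms unfolding j_def by auto
    have 1: "dk \<omega> nR t = dk \<omega> j (t0 + j)" unfolding tj by (rule dk_agree) (use jn in auto)
    have 2: "target_state (dk \<omega> nR) \<gamma> t = tgt \<omega> j"
      unfolding tgt_def target_state_def tj
      by (rule pol_state_cong) (use jn t01 in \<open>auto intro!: dk_agree\<close>)
    have 3: "xsk \<omega> nR ! j = act_at \<omega> j" using jn by (rule xsk_nth)
    show "payment (dk \<omega> nR t) (\<gamma> (target_state (dk \<omega> nR) \<gamma> t))
                       - payment (dk \<omega> nR t) (xsk \<omega> nR ! (t - t0)) = cost \<omega> (t - t0)"
      unfolding j_def[symmetric] 1 2 3 cost_def ..
  qed
  also have "\<dots> = (\<Sum>i\<in>{0..tf - t0}. cost \<omega> (i + t0 - t0))"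
    using sum.shift_bounds_cl_nat_ivl[of "\<lambda>t. cost \<omega> (t - t0)" 0 t0 "tf - t0"] assms by simp
  also have "\<dots> = (\<Sum>j<Suc (tf - t0). cost \<omega> j)"
    by (simp add: atLeast0AtMost lessThan_Suc_atMost)
  finally show ?thesis .
qed

lemma main_bound:
  assumes "t0 \<le> tf" "tf \<le> T"
  shows "measure_pmf.expectation (map_pmf (strat \<gamma> t0) (coins e nR)) (\<lambda>\<omega>. chase_gap \<gamma> \<omega> adv t0 s0 T tf)
     \<le> 1 + Y + real T * e"
proof -
  define k where "k = Suc (tf - t0)"
  have kn: "k \<le> nR" unfolding k_def using assms by simp
  have "measure_pmf.expectation (map_pmf (strat \<gamma> t0) (coins e nR)) (\<lambda>\<omega>. chase_gap \<gamma> \<omega> adv t0 s0 T tf)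
      = measure_pmf.expectation (coins e nR) (\<lambda>cs. chase_gap \<gamma> (strat \<gamma> t0 cs) adv t0 s0 T tf)"
    by simp
  also have "\<dots> \<le> measure_pmf.expectation (coins e nR) (\<lambda>cs. Pot (strat \<gamma> t0 (take k cs)) k)"
  proof (rule pmf_exp_le[OF coins_finite])
    fix cs
    have "chase_gap \<gamma> (strat \<gamma> t0 cs) adv t0 s0 T tf = (\<Sum>j<k. cost (strat \<gamma> t0 cs) j)"
      unfolding k_def by (rule gap_eq[OF assms])
    also have "\<dots> = (\<Sum>j<k. cost (strat \<gamma> t0 (take k cs)) j)"
      by (rule agree_sum_cost[OF strat_take_agree])
    also have "\<dots> \<le> Pot (strat \<gamma> t0 (take k cs)) k"
      unfolding Pot_def using V_bounds(1) by simp
    finally show "chase_gap \<gamma> (strat \<gamma> t0 cs) adv t0 s0 T tf \<le> Pot (strat \<gamma> t0 (take k cs)) k" .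
  qed
  also have "\<dots> = measure_pmf.expectation (map_pmf (take k) (coins e nR)) (\<lambda>cs. Pot (strat \<gamma> t0 cs) k)"
    by simp
  also have "map_pmf (take k) (coins e nR) = coins e k"
  proof -
    have "map_pmf (take k) (coins e (k + (nR - k))) = coins e k" by (rule coins_take)
    then show ?thesis using kn by (metis le_add_diff_inverse)
  qed
  also have "measure_pmf.expectation (coins e k) (\<lambda>cs. Pot (strat \<gamma> t0 cs) k) \<le> 1 + Y + real k * e"
    by (rule exp_pot[OF kn])
  also have "\<dots> \<le> 1 + Y + real T * e"
  proof -
    have "k \<le> T" using kn t01 by simp
    then show ?thesis using e0 by (simp add: mult_right_mono)
  qed
  finally show ?thesis .
qed

end

lemma numeric:
  fixes x :: real and m :: nat
  assumes x1: "1 \<le> x"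
  defines "e \<equiv> (1/2) * x powr (-(1/(real m + 1)))"
  shows "0 < e" "e < 1" "(1 / ((1 - e) * e ^ m)) * ((1 - e) * e ^ m) = 1"
        "1 + 1 / ((1 - e) * e ^ m) + x * e \<le> (2 + 2 ^ (m + 1)) * x powr (real m / real (m + 1))"
proof -
  define b where "b = 1 / (real m + 1)"
  define a where "a = real m / real (m + 1)"
  have ab: "a + b = 1" unfolding a_def b_def by (simp add: field_simps)
  have bm: "real m * b = a" unfolding a_def b_def by simp
  have x0: "0 < x" using x1 by simp
  define P where "P = x powr (- b)"
  have Pb: "x powr b \<ge> 1" using x1 unfolding b_def by (intro ge_one_powr_ge_zero) auto
  have P0: "0 < P" unfolding P_def using x0 by simp
  have P1: "P \<le> 1" unfolding P_def powr_minus using Pb by (simp add: inverse_le_1_iff)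
  have ee: "e = P / 2" unfolding e_def P_def b_def by simp
  show e0: "0 < e" using P0 ee by simp
  have eh: "e \<le> 1/2" using P1 ee by simp
  then show "e < 1" by simp
  have c0: "0 < (1 - e) * e ^ m" using e0 eh by simp
  then show "(1 / ((1 - e) * e ^ m)) * ((1 - e) * e ^ m) = 1" using e0 eh by simp
  have Pm: "P ^ m = x powr (- a)"
    unfolding P_def using x0 powr_power[of x "-b" m] bm by simp
  have Xa: "x powr (- a) * x powr a = 1" using x0 by (simp add: powr_minus)
  have Xa1: "1 \<le> x powr a" using x1 unfolding a_def by (intro ge_one_powr_ge_zero) auto
  have em: "e ^ m = (1/2)^m * x powr (- a)" unfolding ee using Pm by (simp add: power_divide)
  have "(1/2)^(m+1) * x powr (- a) \<le> (1 - e) * e ^ m"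
  proof -
    have "(1/2)^(m+1) * x powr (- a) = (1/2) * e ^ m" unfolding em by simp
    also have "\<dots> \<le> (1 - e) * e ^ m" using eh e0 by (intro mult_right_mono) auto
    finally show ?thesis .
  qed
  then have "1 / ((1 - e) * e ^ m) \<le> 1 / ((1/2)^(m+1) * x powr (- a))"
    by (intro divide_left_mono) (use x0 c0 in auto)
  also have "\<dots> = 2 ^ (m + 1) * x powr a"
    using Xa x0 by (simp add: powr_minus field_simps)
  finally have Yb: "1 / ((1 - e) * e ^ m) \<le> 2 ^ (m + 1) * x powr a" .
  have xe: "x * e = (1/2) * x powr a"
  proof -
    have "x * P = x / x powr b" unfolding P_def by (simp add: powr_minus divide_inverse)
    also have "\<dots> = x powr (1 - b)" using x0 by (simp add: powr_diff)
    also have "1 - b = a" using ab by simp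
    finally show ?thesis unfolding ee by simp
  qed
  show "1 + 1 / ((1 - e) * e ^ m) + x * e \<le> (2 + 2 ^ (m + 1)) * x powr (real m / real (m + 1))"
    unfolding a_def[symmetric] using Yb xe Xa1 by (simp add: algebra_simps)
qed

theorem theorem2:
  shows "\<forall>C W :: nat. \<exists>K :: real. \<forall>(T :: nat) (\<gamma> :: inv \<Rightarrow> prices) (t_init :: nat) (s_init :: inv).
    (\<forall>s. feasible s (\<gamma> s)) \<and> 1 \<le> t_init \<and> t_init \<le> T \<and> finite (dom s_init) \<and> ran s_init \<subseteq> {..C}
    \<longrightarrow> (\<exists>\<Omega> :: strategy pmf. \<forall>adv :: adversary.
          rd_act (adv t_init []) = dom s_init \<and>
          (\<forall>xs. length xs = Suc T - t_init \<longrightarrow> valid_instance C W T (rdata adv t_init xs))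
          \<longrightarrow> (\<forall>\<omega>\<in>set_pmf \<Omega>. \<forall>k < Suc T - t_init.
                 feasible (fst (ohist \<omega> adv t_init s_init k)) (oracle_actions \<omega> adv t_init s_init T ! k))
            \<and> (\<forall>t_final. t_init \<le> t_final \<and> t_final \<le> T \<longrightarrow>
                 measure_pmf.expectation \<Omega> (\<lambda>\<omega>. chase_gap \<gamma> \<omega> adv t_init s_init T t_final)
                   \<le> K * real T powr (real (C * W) / real (C * W + 1))))"
proof (intro allI)
  fix C W :: nat
  define m where "m = C * W"
  show "\<exists>K :: real. \<forall>(T :: nat) (\<gamma> :: inv \<Rightarrow> prices) (t_init :: nat) (s_init :: inv).
    (\<forall>s. feasible s (\<gamma> s)) \<and> 1 \<le> t_init \<and> t_init \<le> T \<and> finite (dom s_init) \<and> ran s_init \<subseteq> {..C}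
    \<longrightarrow> (\<exists>\<Omega> :: strategy pmf. \<forall>adv :: adversary.
          rd_act (adv t_init []) = dom s_init \<and>
          (\<forall>xs. length xs = Suc T - t_init \<longrightarrow> valid_instance C W T (rdata adv t_init xs))
          \<longrightarrow> (\<forall>\<omega>\<in>set_pmf \<Omega>. \<forall>k < Suc T - t_init.
                 feasible (fst (ohist \<omega> adv t_init s_init k)) (oracle_actions \<omega> adv t_init s_init T ! k))
            \<and> (\<forall>t_final. t_init \<le> t_final \<and> t_final \<le> T \<longrightarrow>
                 measure_pmf.expectation \<Omega> (\<lambda>\<omega>. chase_gap \<gamma> \<omega> adv t_init s_init T t_final)
                   \<le> K * real T powr (real (C * W) / real (C * W + 1))))"
  proof (intro exI[of _ "2 + 2 ^ (m + 1)"] allI impI)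
    fix T :: nat and \<gamma> :: "inv \<Rightarrow> prices" and t_init :: nat and s_init :: inv
    assume A: "(\<forall>s. feasible s (\<gamma> s)) \<and> 1 \<le> t_init \<and> t_init \<le> T \<and> finite (dom s_init) \<and> ran s_init \<subseteq> {..C}"
    define e where "e = (1/2) * real T powr (-(1/(real m + 1)))"
    define Y where "Y = 1 / ((1 - e) * e ^ m)"
    have T1: "1 \<le> real T" using A by simp
    note num = numeric[OF T1, of m, folded e_def, folded Y_def]
    show "\<exists>\<Omega> :: strategy pmf. \<forall>adv :: adversary.
          rd_act (adv t_init []) = dom s_init \<and>
          (\<forall>xs. length xs = Suc T - t_init \<longrightarrow> valid_instance C W T (rdata adv t_init xs))
          \<longrightarrow> (\<forall>\<omega>\<in>set_pmf \<Omega>. \<forall>k < Suc T - t_init.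
                 feasible (fst (ohist \<omega> adv t_init s_init k)) (oracle_actions \<omega> adv t_init s_init T ! k))
            \<and> (\<forall>t_final. t_init \<le> t_final \<and> t_final \<le> T \<longrightarrow>
                 measure_pmf.expectation \<Omega> (\<lambda>\<omega>. chase_gap \<gamma> \<omega> adv t_init s_init T t_final)
                   \<le> (2 + 2 ^ (m + 1)) * real T powr (real (C * W) / real (C * W + 1)))"
    proof (intro exI[of _ "map_pmf (strat \<gamma> t_init) (coins e (Suc T - t_init))"] allI impI)
      fix adv :: adversary
      assume B: "rd_act (adv t_init []) = dom s_init \<and>
          (\<forall>xs. length xs = Suc T - t_init \<longrightarrow> valid_instance C W T (rdata adv t_init xs))"
      interpret chase_pot C W T \<gamma> t_init s_init adv e Y m
        apply unfold_locales
        using A B num m_def by auto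
      show "(\<forall>\<omega>\<in>set_pmf (map_pmf (strat \<gamma> t_init) (coins e (Suc T - t_init))). \<forall>k < Suc T - t_init.
                 feasible (fst (ohist \<omega> adv t_init s_init k)) (oracle_actions \<omega> adv t_init s_init T ! k))
            \<and> (\<forall>t_final. t_init \<le> t_final \<and> t_final \<le> T \<longrightarrow>
                 measure_pmf.expectation (map_pmf (strat \<gamma> t_init) (coins e (Suc T - t_init)))
                    (\<lambda>\<omega>. chase_gap \<gamma> \<omega> adv t_init s_init T t_final)
                   \<le> (2 + 2 ^ (m + 1)) * real T powr (real (C * W) / real (C * W + 1)))"
      proof (intro conjI ballI allI impI)
        fix \<omega> k
        assume "\<omega> \<in> set_pmf (map_pmf (strat \<gamma> t_init) (coins e (Suc T - t_init)))" and k: "k < Suc T - t_init"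
        then obtain cs where "\<omega> = strat \<gamma> t_init cs" by auto
        then show "feasible (fst (ohist \<omega> adv t_init s_init k)) (oracle_actions \<omega> adv t_init s_init T ! k)"
          using feas_part[OF k] by simp
      next
        fix tf
        assume tf: "t_init \<le> tf \<and> tf \<le> T"
        have "measure_pmf.expectation (map_pmf (strat \<gamma> t_init) (coins e (Suc T - t_init)))
                    (\<lambda>\<omega>. chase_gap \<gamma> \<omega> adv t_init s_init T tf) \<le> 1 + Y + real T * e"
          using main_bound tf by simp
        also have "\<dots> \<le> (2 + 2 ^ (m + 1)) * real T powr (real m / real (m + 1))"
          using num(4) unfolding Y_def by simp
        finally show "measure_pmf.expectation (map_pmf (strat \<gamma> t_init) (coins e (Suc T - t_init)))
                    (\<lambda>\<omega>. chase_gap \<gamma> \<omega> adv t_init s_init T tf)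
                   \<le> (2 + 2 ^ (m + 1)) * real T powr (real (C * W) / real (C * W + 1))"
          unfolding m_def .
      qed
    qed
  qed
qed

end
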